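(* Let $d\in\mathbb{N}$, $d\geq 2$, $r>0$ and let $A\subseteq \mathbb{R}^{d}$ be $r$-separated. Then there exists a $16\max\{\frac{3d}{r},1\}$-bilipschitz mapping $\Phi\colon \mathbb{R}^{d}\to\mathbb{R}^{d}$ such that $\Phi(A)\subseteq \mathbb{Z}^{d}$.
   Context: $A$ is $r$-separated if $\|a-a'\|\geq r$ for all distinct $a,a'\in A$ (Euclidean norm). A mapping is $L$-bilipschitz if it is injective and both it and its inverse are $L$-Lipschitz. *)

theory Defs
  imports "HOL-Analysis.Analysis"
begin

definition r_separated :: "real \<Rightarrow> 'a::real_normed_vector set \<Rightarrow> bool" where
  "r_separated r A \<longleftrightarrow> (\<forall>a\<in>A. \<forall>a'\<in>A. a \<noteq> a' \<longrightarrow> norm (a - a') \<ge> r)"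

definition bilipschitz :: "real \<Rightarrow> ('a::metric_space \<Rightarrow> 'b::metric_space) \<Rightarrow> bool" where
  "bilipschitz L f \<longleftrightarrow> inj f \<and> lipschitz_on L UNIV f \<and> lipschitz_on L (range f) (inv f)"

definition integer_lattice :: "(real ^ 'n) set" where
  "integer_lattice = {x. \<forall>i. x $ i \<in> \<int>}"

end

theory Submission
  imports Defs
begin
definition bump :: "real \<Rightarrow> 'a set \<Rightarrow> ('a \<Rightarrow> 'a) \<Rightarrow> 'a \<Rightarrow> 'a::real_normed_vector" where
 "bump R B w x = (if \<exists>b\<in>B. norm (x - b) < R
    then (let b = (SOME b. b \<in> B \<and> norm (x - b) < R) in ((R - norm (x - b)) / R) *\<^sub>R w b) else 0)"

lemma tri: fixes a b c :: "'a::real_normed_vector" shows "norm (a - b) \<le> norm (a - c) + norm (c - b)"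
  by (rule norm_diff_triangle_le) auto

lemma tri2: fixes a b x :: "'a::real_normed_vector" shows "norm (a - b) \<le> norm (x - a) + norm (x - b)"
  using tri[of a b x] norm_minus_commute[of a x] by linarith

lemma bump_eq:
  fixes B :: "'a::real_normed_vector set"
  assumes sep: "\<forall>b\<in>B. \<forall>b'\<in>B. b \<noteq> b' \<longrightarrow> norm (b - b') \<ge> 2 * R"
    and b: "b \<in> B" "norm (x - b) < R"
  shows "bump R B w x = ((R - norm (x - b)) / R) *\<^sub>R w b"
proof -
  have ex: "\<exists>b\<in>B. norm (x - b) < R" using b by blast
  define c where "c = (SOME b. b \<in> B \<and> norm (x - b) < R)"
  have c: "c \<in> B \<and> norm (x - c) < R" unfolding c_def by (rule someI[of _ b]) (use b in auto)
  have "norm (c - b) \<le> norm (x - c) + norm (x - b)"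
    by (rule tri2)
  then have "c = b" using sep c b by force
  then show ?thesis using ex unfolding bump_def c_def[symmetric] by (simp add: Let_def c_def)
qed

lemma bump_out:
  assumes "\<not> (\<exists>b\<in>B. norm (x - b) < R)"
  shows "bump R B w x = 0"
  using assms unfolding bump_def by auto

lemma bump_lip:
  fixes B :: "'a::real_normed_vector set"
  assumes R: "R > 0" and sep: "\<forall>b\<in>B. \<forall>b'\<in>B. b \<noteq> b' \<longrightarrow> norm (b - b') \<ge> 2 * R"
    and wM: "\<forall>b\<in>B. norm (w b) \<le> M" and M: "M \<ge> 0"
  shows "norm (bump R B w x - bump R B w y) \<le> M / R * norm (x - y)"
proof -
  define u where "u z = (if \<exists>b\<in>B. norm (z - b) < R then R - norm (z - (SOME b. b \<in> B \<and> norm (z - b) < R)) else 0)" for z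
  have uval: "u z = R - norm (z - b)" if b: "b \<in> B" "norm (z - b) < R" for z b
  proof -
    have c: "(SOME b. b \<in> B \<and> norm (z - b) < R) \<in> B \<and> norm (z - (SOME b. b \<in> B \<and> norm (z - b) < R)) < R"
      by (rule someI[of _ b]) (use b in auto)
    have "(SOME b. b \<in> B \<and> norm (z - b) < R) = b"
    proof (rule ccontr)
      assume ne: "(SOME b. b \<in> B \<and> norm (z - b) < R) \<noteq> b"
      let ?c = "(SOME b. b \<in> B \<and> norm (z - b) < R)"
      have "norm (?c - b) \<le> norm (z - ?c) + norm (z - b)"
        by (rule tri2)
      then show False using sep c b ne by force
    qed
    then show ?thesis unfolding u_def using b by auto
  qed
  have small: "norm (bump R B w z) \<le> M / R * u z" for z
  proof (cases "\<exists>b\<in>B. norm (z - b) < R")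
    case True
    then obtain b where b: "b \<in> B" "norm (z - b) < R" by blast
    have c: "(SOME b. b \<in> B \<and> norm (z - b) < R) \<in> B \<and> norm (z - (SOME b. b \<in> B \<and> norm (z - b) < R)) < R"
      by (rule someI[of _ b]) (use b in auto)
    have "bump R B w z = ((R - norm (z - b)) / R) *\<^sub>R w b" using bump_eq[OF sep b] .
    moreover have "u z = R - norm (z - b)"
    proof -
      have "(SOME b. b \<in> B \<and> norm (z - b) < R) = b"
      proof (rule ccontr)
        assume ne: "(SOME b. b \<in> B \<and> norm (z - b) < R) \<noteq> b"
        let ?c = "(SOME b. b \<in> B \<and> norm (z - b) < R)"
        have "norm (?c - b) \<le> norm (z - ?c) + norm (z - b)"
          by (rule tri2)
        then show False using sep c b ne by force
      qed
      then show ?thesis unfolding u_def using True by simp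
    qed
    moreover have "norm (((R - norm (z - b)) / R) *\<^sub>R w b) \<le> M / R * (R - norm (z - b))"
    proof -
      have "norm (((R - norm (z - b)) / R) *\<^sub>R w b) = (R - norm (z - b)) / R * norm (w b)"
        using b R by simp
      also have "\<dots> \<le> (R - norm (z - b)) / R * M"
        using b R wM by (intro mult_left_mono) auto
      also have "\<dots> = M / R * (R - norm (z - b))" by simp
      finally show ?thesis .
    qed
    ultimately show ?thesis by simp
  next
    case False
    then show ?thesis using bump_out[OF False] unfolding u_def by simp
  qed
  show ?thesis
  proof (cases "\<exists>b\<in>B. norm (x - b) < R \<and> norm (y - b) < R")
    case True
    then obtain b where b: "b \<in> B" "norm (x - b) < R" "norm (y - b) < R" by blast
    have "bump R B w x - bump R B w y = ((norm (y - b) - norm (x - b)) / R) *\<^sub>R w b"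
      using bump_eq[OF sep b(1,2)] bump_eq[OF sep b(1,3)] by (simp add: diff_divide_distrib scaleR_diff_left)
    also have "norm \<dots> = \<bar>norm (y - b) - norm (x - b)\<bar> / R * norm (w b)" using R by simp
    also have "\<dots> \<le> norm (x - y) / R * M"
    proof (rule mult_mono)
      have "\<bar>norm (y - b) - norm (x - b)\<bar> \<le> norm ((y - b) - (x - b))" by (rule norm_triangle_ineq3)
      also have "\<dots> = norm (x - y)" by (simp add: norm_minus_commute)
      finally show "\<bar>norm (y - b) - norm (x - b)\<bar> / R \<le> norm (x - y) / R" using R by (simp add: divide_right_mono)
    qed (use wM b R in auto)
    also have "\<dots> = M / R * norm (x - y)" by simp
    finally show ?thesis .
  next
    case False
    have uu: "u x + u y \<le> norm (x - y)"
    proof (cases "\<exists>b\<in>B. norm (x - b) < R")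
      case tx: True
      then obtain b where b: "b \<in> B" "norm (x - b) < R" by blast
      have ux: "u x = R - norm (x - b)" using uval b by blast
      show ?thesis
      proof (cases "\<exists>b\<in>B. norm (y - b) < R")
        case True
        then obtain b' where b': "b' \<in> B" "norm (y - b') < R" by blast
        have uy: "u y = R - norm (y - b')" using uval b' by blast
        have "b \<noteq> b'" using False b b' by blast
        then have "norm (b - b') \<ge> 2 * R" using sep b b' by blast
        moreover have "norm (b - b') \<le> norm (x - b) + norm (x - y) + norm (y - b')"
          using tri2[of b b' x] tri[of x b' y] by linarith
        ultimately show ?thesis using ux uy by linarith
      next
        case f2: False
        have "norm (y - b) \<ge> R" using f2 b by auto
        moreover have "norm (y - b) \<le> norm (x - y) + norm (x - b)"
          using tri[of y b x] norm_minus_commute[of y x] by linarith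
        ultimately show ?thesis using ux f2 unfolding u_def by auto
      qed
    next
      case fx: False
      have ux: "u x = 0" using fx unfolding u_def by auto
      show ?thesis
      proof (cases "\<exists>b\<in>B. norm (y - b) < R")
        case True
        then obtain b' where b': "b' \<in> B" "norm (y - b') < R" by blast
        have uy: "u y = R - norm (y - b')" using uval b' by blast
        have "norm (x - b') \<ge> R" using fx b' by auto
        moreover have "norm (x - b') \<le> norm (x - y) + norm (y - b')"
          by (rule tri)
        ultimately show ?thesis using ux uy by linarith
      next
        case False
        then show ?thesis using ux unfolding u_def by auto
      qed
    qed
    have "norm (bump R B w x - bump R B w y) \<le> norm (bump R B w x) + norm (bump R B w y)"
      by (rule norm_triangle_ineq4)
    also have "\<dots> \<le> M / R * u x + M / R * u y" using small[of x] small[of y] by linarith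
    also have "\<dots> = M / R * (u x + u y)" by (simp add: distrib_left)
    also have "\<dots> \<le> M / R * norm (x - y)" using uu R M
      by (intro mult_left_mono) auto
    finally show ?thesis .
  qed
qed

lemma round_norm:
  fixes b :: "real ^ 'n"
  shows "norm ((\<chi> i. of_int \<lfloor>b $ i\<rfloor>) - b) \<le> real CARD('n)"
proof -
  have "norm ((\<chi> i. of_int \<lfloor>b $ i\<rfloor>) - b) \<le> (\<Sum>i\<in>UNIV. \<bar>((\<chi> i. of_int \<lfloor>b $ i\<rfloor>) - b) $ i\<bar>)"
    by (rule norm_le_l1_cart)
  also have "\<dots> \<le> (\<Sum>i\<in>(UNIV::'n set). 1)"
  proof (rule sum_mono)
    fix i
    show "\<bar>((\<chi> i. of_int \<lfloor>b $ i\<rfloor>) - b) $ i\<bar> \<le> 1"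
      proof -
      have h1: "of_int \<lfloor>b $ i\<rfloor> \<le> b $ i" by (rule of_int_floor_le)
      have h2: "b $ i < of_int \<lfloor>b $ i\<rfloor> + 1" by (rule real_of_int_floor_add_one_gt)
      have "((\<chi> i. of_int \<lfloor>b $ i\<rfloor>) - b) $ i = of_int \<lfloor>b $ i\<rfloor> - b $ i" by simp
      then show ?thesis using h1 h2 by (simp only: abs_le_iff) linarith
    qed
  qed
  finally show ?thesis by simp
qed

theorem lemma4p1:
  fixes A :: "(real ^ 'n) set" and r :: real
  assumes "CARD('n) \<ge> 2" and "r > 0" and "r_separated r A"
  shows "\<exists>\<Phi> :: real ^ 'n \<Rightarrow> real ^ 'n.
           bilipschitz (16 * max (3 * real CARD('n) / r) 1) \<Phi> \<and> \<Phi> ` A \<subseteq> integer_lattice"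
proof -
  define d where "d = real CARD('n)"
  have d: "d \<ge> 2" using assms(1) unfolding d_def by simp
  define l where "l = max (3 * d / r) 1"
  have l1: "l \<ge> 1" unfolding l_def by simp
  have lr: "l * r \<ge> 3 * d"
  proof -
    have "l * r \<ge> (3 * d / r) * r" unfolding l_def using assms(2) by (intro mult_right_mono) auto
    then show ?thesis using assms(2) by simp
  qed
  define R where "R = 3 * d / 2"
  have R: "R > 0" unfolding R_def using d by simp
  define B where "B = (\<lambda>x. l *\<^sub>R x) ` A"
  define w :: "real ^ 'n \<Rightarrow> real ^ 'n" where "w b = (\<chi> i. of_int \<lfloor>b $ i\<rfloor>) - b" for b
  have sep: "\<forall>b\<in>B. \<forall>b'\<in>B. b \<noteq> b' \<longrightarrow> norm (b - b') \<ge> 2 * R"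
  proof (intro ballI impI)
    fix b b' assume "b \<in> B" "b' \<in> B" "b \<noteq> b'"
    then obtain a a' where aa: "a \<in> A" "a' \<in> A" "b = l *\<^sub>R a" "b' = l *\<^sub>R a'" "a \<noteq> a'"
      unfolding B_def by auto
    have "norm (a - a') \<ge> r" using assms(3) aa unfolding r_separated_def by blast
    have "norm (b - b') = l * norm (a - a')" using aa l1
      by (simp add: scaleR_diff_right[symmetric])
    also have "\<dots> \<ge> l * r" using \<open>norm (a - a') \<ge> r\<close> l1 by (intro mult_left_mono) auto
    finally show "norm (b - b') \<ge> 2 * R" using lr unfolding R_def by linarith
  qed
  have wM: "\<forall>b\<in>B. norm (w b) \<le> d" unfolding w_def d_def using round_norm by blast
  define c where "c = d / R"
  have c: "c = 2 / 3" unfolding c_def R_def using d by simp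
  define \<Phi> :: "real ^ 'n \<Rightarrow> real ^ 'n" where "\<Phi> x = l *\<^sub>R x + bump R B w (l *\<^sub>R x)" for x
  have blip: "norm (bump R B w (l *\<^sub>R x) - bump R B w (l *\<^sub>R y)) \<le> c * (l * norm (x - y))" for x y
  proof -
    have "norm (bump R B w (l *\<^sub>R x) - bump R B w (l *\<^sub>R y)) \<le> d / R * norm (l *\<^sub>R x - l *\<^sub>R y)"
      by (rule bump_lip[OF R sep wM]) (use d in simp)
    also have "norm (l *\<^sub>R x - l *\<^sub>R y) = l * norm (x - y)" using l1
      by (simp add: scaleR_diff_right[symmetric])
    finally show ?thesis unfolding c_def .
  qed
  have up: "norm (\<Phi> x - \<Phi> y) \<le> (5/3) * l * norm (x - y)" for x y
  proof -
    have "\<Phi> x - \<Phi> y = (l *\<^sub>R x - l *\<^sub>R y) + (bump R B w (l *\<^sub>R x) - bump R B w (l *\<^sub>R y))"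
      unfolding \<Phi>_def by (simp add: algebra_simps)
    then have "norm (\<Phi> x - \<Phi> y) \<le> norm (l *\<^sub>R x - l *\<^sub>R y) + norm (bump R B w (l *\<^sub>R x) - bump R B w (l *\<^sub>R y))"
      by (metis norm_triangle_ineq)
    also have "norm (l *\<^sub>R x - l *\<^sub>R y) = l * norm (x - y)" using l1
      by (simp add: scaleR_diff_right[symmetric])
    finally show ?thesis using blip[of x y] c by simp
  qed
  have low: "l * norm (x - y) \<le> 3 * norm (\<Phi> x - \<Phi> y)" for x y
  proof -
    have "l *\<^sub>R x - l *\<^sub>R y = (\<Phi> x - \<Phi> y) - (bump R B w (l *\<^sub>R x) - bump R B w (l *\<^sub>R y))"
      unfolding \<Phi>_def by (simp add: algebra_simps)
    then have "norm (l *\<^sub>R x - l *\<^sub>R y) \<le> norm (\<Phi> x - \<Phi> y) + norm (bump R B w (l *\<^sub>R x) - bump R B w (l *\<^sub>R y))"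
      by (metis norm_triangle_ineq4)
    also have "norm (l *\<^sub>R x - l *\<^sub>R y) = l * norm (x - y)" using l1
      by (simp add: scaleR_diff_right[symmetric])
    finally show ?thesis using blip[of x y] c by simp
  qed
  have low2: "norm (x - y) \<le> 3 * norm (\<Phi> x - \<Phi> y)" for x y
  proof -
    have "norm (x - y) \<le> l * norm (x - y)" using l1 by (simp add: mult_le_cancel_right1)
    then show ?thesis using low[of x y] by linarith
  qed
  have inj: "inj \<Phi>"
  proof (rule injI)
    fix x y assume "\<Phi> x = \<Phi> y"
    then show "x = y" using low2[of x y] by simp
  qed
  have L: "16 * max (3 * real CARD('n) / r) 1 = 16 * l" unfolding l_def d_def ..
  have "bilipschitz (16 * l) \<Phi>"
    unfolding bilipschitz_def
  proof (intro conjI inj)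
    show "lipschitz_on (16 * l) UNIV \<Phi>"
    proof (rule lipschitz_onI)
      fix x y :: "real ^ 'n"
      have "(5/3) * l * norm (x - y) \<le> 16 * l * norm (x - y)" using l1 by (intro mult_right_mono) auto
      then show "dist (\<Phi> x) (\<Phi> y) \<le> 16 * l * dist x y" using up[of x y] by (simp add: dist_norm)
    qed (use l1 in simp)
    show "lipschitz_on (16 * l) (range \<Phi>) (inv \<Phi>)"
    proof (rule lipschitz_onI)
      fix u v assume "u \<in> range \<Phi>" "v \<in> range \<Phi>"
      then obtain x y where xy: "u = \<Phi> x" "v = \<Phi> y" by blast
      have "inv \<Phi> u = x" "inv \<Phi> v = y" using xy inj by auto
      moreover have "3 * norm (\<Phi> x - \<Phi> y) \<le> 16 * l * norm (\<Phi> x - \<Phi> y)" using l1 by (intro mult_right_mono) auto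
      ultimately show "dist (inv \<Phi> u) (inv \<Phi> v) \<le> 16 * l * dist u v" using low2[of x y] xy by (simp add: dist_norm)
    qed (use l1 in simp)
  qed
  moreover have "\<Phi> ` A \<subseteq> integer_lattice"
  proof
    fix z assume "z \<in> \<Phi> ` A"
    then obtain a where a: "a \<in> A" "z = \<Phi> a" by blast
    have b: "l *\<^sub>R a \<in> B" "norm (l *\<^sub>R a - l *\<^sub>R a) < R" using a R unfolding B_def by auto
    have "bump R B w (l *\<^sub>R a) = w (l *\<^sub>R a)" using bump_eq[OF sep b] R by simp
    then have "z = (\<chi> i. of_int \<lfloor>(l *\<^sub>R a) $ i\<rfloor>)" using a unfolding \<Phi>_def w_def by simp
    then show "z \<in> integer_lattice" unfolding integer_lattice_def by auto
  qed
  ultimately show ?thesis unfolding L by blast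
qed

end
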